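(* In the linear deterministic diamond network with a disturbing node with gains $n_1,n_2,n_3,n_4,m$, suppose $n_1>n_2$, $n_3\ge n_4$ and $m\le n_1$. Then the linear capacity is $$C=\min\big(n_1-m+\min(m,n_4),\ n_3\big).$$
   Context: The shift matrix $Q$ is the $q\times q$ matrix over $\mathbb{F}_2$ with $Q_{i+1,i}=1$ for $1\le i\le q-1$ and all other entries $0$, where $q=\max(n_1,n_2,n_3,n_4,m)$ and all gains are nonnegative integers. Network: source $S$, relays $A,B$, destination $D$, disturbing node $M$; gains $n_1$ ($S\to A$), $n_2$ ($S\to B$), $n_3$ ($A\to D$), $n_4$ ($B\to D$), $m$ ($M\to A$ and $M\to B$). Each node transmits $x_i\in\mathbb{F}_2^q$ and receives $y_j=\sum_{k:(k,j)\text{ an edge}}Q^{q-n_{(k,j)}}x_k$; relays use linear maps $x_A=G_Ay_A$, $x_B=G_By_B$ with $G_A,G_B$ arbitrary $q\times q$ matrices over $\mathbb{F}_2$. Then $y_D=G_Sx_S+G_Mx_M$ with $G_S=Q^{q-n_3}G_AQ^{q-n_1}+Q^{q-n_4}G_BQ^{q-n_2}$ and $G_M=Q^{q-n_3}G_AQ^{q-m}+Q^{q-n_4}G_BQ^{q-m}$. The rate $R(G_A,G_B)$ is the maximum dimension of a subspace $\mathcal{X}\subseteq\mathbb{F}_2^q$ such that for all $x_S,x_S'\in\mathcal{X}$, $x_M,x_M'\in\mathbb{F}_2^q$, $G_Sx_S+G_Mx_M=G_Sx_S'+G_Mx_M'$ implies $x_S=x_S'$. The linear capacity is $C=\max_{G_A,G_B}R(G_A,G_B)$.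 *)

theory Defs
  imports "HOL-Library.Z2" "Jordan_Normal_Form.VS_Connect"
begin

text \<open>Vectors and matrices are those of
  Jordan_Normal_Form; indices are 0-based, so the shift matrix Q has
  Q(i+1,i) = 1 for 0 <= i < q-1 and all other entries 0.\<close>

definition net_q :: "nat \<Rightarrow> nat \<Rightarrow> nat \<Rightarrow> nat \<Rightarrow> nat \<Rightarrow> nat" where
  "net_q n1 n2 n3 n4 m = max n1 (max n2 (max n3 (max n4 m)))"

definition shift_mat :: "nat \<Rightarrow> bit mat" where
  "shift_mat q = mat q q (\<lambda>(i, j). if i = j + 1 then 1 else 0)"

definition chan :: "nat \<Rightarrow> nat \<Rightarrow> bit mat" where
  "chan q n = shift_mat q ^\<^sub>m (q - n)"

definition G_S :: "nat \<Rightarrow> nat \<Rightarrow> nat \<Rightarrow> nat \<Rightarrow> nat \<Rightarrow> bit mat \<Rightarrow> bit mat \<Rightarrow> bit mat" where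
  "G_S n1 n2 n3 n4 m GA GB =
     (let q = net_q n1 n2 n3 n4 m in
      chan q n3 * GA * chan q n1 + chan q n4 * GB * chan q n2)"

definition G_M :: "nat \<Rightarrow> nat \<Rightarrow> nat \<Rightarrow> nat \<Rightarrow> nat \<Rightarrow> bit mat \<Rightarrow> bit mat \<Rightarrow> bit mat" where
  "G_M n1 n2 n3 n4 m GA GB =
     (let q = net_q n1 n2 n3 n4 m in
      chan q n3 * GA * chan q m + chan q n4 * GB * chan q m)"

definition decodable :: "nat \<Rightarrow> bit mat \<Rightarrow> bit mat \<Rightarrow> bit vec set \<Rightarrow> bool" where
  "decodable q GS GM X \<longleftrightarrow>
     (\<forall>xS \<in> X. \<forall>xS' \<in> X. \<forall>xM \<in> carrier_vec q. \<forall>xM' \<in> carrier_vec q.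
        GS *\<^sub>v xS + GM *\<^sub>v xM = GS *\<^sub>v xS' + GM *\<^sub>v xM' \<longrightarrow> xS = xS')"

definition achievable_dims :: "nat \<Rightarrow> nat \<Rightarrow> nat \<Rightarrow> nat \<Rightarrow> nat \<Rightarrow> bit mat \<Rightarrow> bit mat \<Rightarrow> nat set" where
  "achievable_dims n1 n2 n3 n4 m GA GB =
     (let q = net_q n1 n2 n3 n4 m in
      {d. \<exists>X. VectorSpace.subspace class_ring X (module_vec TYPE(bit) q) \<and>
             vectorspace.dim class_ring ((module_vec TYPE(bit) q)\<lparr>carrier := X\<rparr>) = d \<and>
             decodable q (G_S n1 n2 n3 n4 m GA GB) (G_M n1 n2 n3 n4 m GA GB) X})"

definition rate :: "nat \<Rightarrow> nat \<Rightarrow> nat \<Rightarrow> nat \<Rightarrow> nat \<Rightarrow> bit mat \<Rightarrow> bit mat \<Rightarrow> nat" where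
  "rate n1 n2 n3 n4 m GA GB = Max (achievable_dims n1 n2 n3 n4 m GA GB)"

definition linear_capacity :: "nat \<Rightarrow> nat \<Rightarrow> nat \<Rightarrow> nat \<Rightarrow> nat \<Rightarrow> nat" where
  "linear_capacity n1 n2 n3 n4 m =
     (let q = net_q n1 n2 n3 n4 m in
      Max {rate n1 n2 n3 n4 m GA GB | GA GB. GA \<in> carrier_mat q q \<and> GB \<in> carrier_mat q q})"

end

theory Submission
  imports Defs
begin

lemma UNIV_bit: "(UNIV :: bit set) = {0,1}"
proof -
  { fix x :: bit have "x \<in> {0,1}" by (cases x) auto }
  then show ?thesis by blast
qed

lemma card_bit: "card (UNIV :: bit set) = 2" by (simp add: UNIV_bit)

lemma finite_lists_bit: "finite {xs. set xs \<subseteq> (UNIV::bit set) \<and> length xs = q}"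
  by (intro finite_lists_length_eq) (simp add: UNIV_bit)

lemma finite_carrier_vec_bit: "finite (carrier_vec q :: bit vec set)"
proof -
  have "carrier_vec q \<subseteq> vec_of_list ` {xs. set xs \<subseteq> (UNIV::bit set) \<and> length xs = q}"
  proof
    fix v :: "bit vec" assume "v \<in> carrier_vec q"
    then have "length (list_of_vec v) = q" by simp
    moreover have "v = vec_of_list (list_of_vec v)" by (rule vec_list[symmetric])
    ultimately show "v \<in> vec_of_list ` {xs. set xs \<subseteq> (UNIV::bit set) \<and> length xs = q}"
      by (intro image_eqI[of v vec_of_list "list_of_vec v"]) auto
  qed
  then show ?thesis by (rule finite_subset[OF _ finite_imageI[OF finite_lists_bit]])
qed

lemma (in vectorspace) lincomb_bij:
  assumes "finite A" "basis A"
  shows "bij_betw (\<lambda>a. lincomb a A) (A \<rightarrow>\<^sub>E carrier K) (carrier V)"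
proof -
  have AC: "A \<subseteq> carrier V" using assms(2) unfolding basis_def by simp
  have u: "\<forall>v. v\<in> carrier V \<longrightarrow>(\<exists>! a.  a\<in>A \<rightarrow>\<^sub>E carrier K \<and> lincomb a A = v)"
    using basis_criterion[OF assms(1) AC] assms(2) by simp
  show ?thesis
  proof (rule bij_betw_imageI)
    show "inj_on (\<lambda>a. lincomb a A) (A \<rightarrow>\<^sub>E carrier K)"
    proof (rule inj_onI)
      fix a b assume a: "a \<in> A \<rightarrow>\<^sub>E carrier K" and b: "b \<in> A \<rightarrow>\<^sub>E carrier K"
        and e: "lincomb a A = lincomb b A"
      have "a \<in> A \<rightarrow> carrier K" using a by (simp add: PiE_iff Pi_iff)
      then have c: "lincomb a A \<in> carrier V" using AC by (intro lincomb_closed)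
      from u c have "\<exists>! a'.  a'\<in>A \<rightarrow>\<^sub>E carrier K \<and> lincomb a' A = lincomb a A" by simp
      then obtain a' where aa: "\<forall>y. y \<in> A \<rightarrow>\<^sub>E carrier K \<and> lincomb y A = lincomb a A \<longrightarrow> y = a'" by (elim ex1E) simp
      have "a = a'" using aa a by blast
      moreover have "b = a'" using aa b e by metis
      ultimately show "a = b" by simp
    qed
    show "(\<lambda>a. lincomb a A) ` (A \<rightarrow>\<^sub>E carrier K) = carrier V"
    proof
      show "(\<lambda>a. lincomb a A) ` (A \<rightarrow>\<^sub>E carrier K) \<subseteq> carrier V"
      proof
        fix v assume "v \<in> (\<lambda>a. lincomb a A) ` (A \<rightarrow>\<^sub>E carrier K)"
        then obtain a where a: "a \<in> A \<rightarrow>\<^sub>E carrier K" and v: "v = lincomb a A" by (elim imageE)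
        have "a \<in> A \<rightarrow> carrier K" using a by (simp add: PiE_iff Pi_iff)
        then show "v \<in> carrier V" unfolding v using AC by (intro lincomb_closed)
      qed
      show "carrier V \<subseteq> (\<lambda>a. lincomb a A) ` (A \<rightarrow>\<^sub>E carrier K)"
      proof
        fix v assume "v \<in> carrier V"
        with u obtain a where "a\<in>A \<rightarrow>\<^sub>E carrier K" "lincomb a A = v" by (elim allE impE ex1E) auto
        then show "v \<in> (\<lambda>a. lincomb a A) ` (A \<rightarrow>\<^sub>E carrier K)" by (intro image_eqI[of v _ a]) simp_all
      qed
    qed
  qed
qed

lemma (in vectorspace) card_carrier_dim:
  assumes "fin_dim" "finite (carrier K)"
  shows "card (carrier V) = card (carrier K) ^ dim"
proof -
  obtain A where A: "finite A" "basis A" using finite_basis_exists assms(1) by blast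
  have "card (carrier V) = card (A \<rightarrow>\<^sub>E carrier K)"
    using bij_betw_same_card[OF lincomb_bij[OF A]] by simp
  also have "\<dots> = card (carrier K) ^ card A" using A(1) by (simp add: card_PiE)
  also have "card A = dim" using dim_basis A by simp
  finally show ?thesis .
qed

lemma card_subspace:
  assumes "VectorSpace.subspace class_ring X (module_vec TYPE(bit) q)"
  shows "card X = 2 ^ vectorspace.dim class_ring ((module_vec TYPE(bit) q)\<lparr>carrier := X\<rparr>)"
proof -
  interpret V: vec_space "TYPE(bit)" q .
  have vs: "vectorspace class_ring ((module_vec TYPE(bit) q)\<lparr>carrier := X\<rparr>)"
    using V.subspace_is_vs[OF assms] .
  have sm: "submodule class_ring X (module_vec TYPE(bit) q)" using assms unfolding subspace_def by simp
  have XC: "X \<subseteq> carrier_vec q" using sm unfolding submodule_def by simp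
  have fX: "finite X" using finite_subset[OF XC finite_carrier_vec_bit] .
  have sp: "V.span X = X"
  proof
    show "V.span X \<subseteq> X" using V.span_is_subset[OF subset_refl sm] .
    show "X \<subseteq> V.span X" using V.in_own_span XC by simp
  qed
  have fd0: "vectorspace.fin_dim class_ring (V.vs (V.span X))"
    using V.fin_dim_span[OF fX] XC by simp
  have fd: "vectorspace.fin_dim class_ring ((module_vec TYPE(bit) q)\<lparr>carrier := X\<rparr>)"
    using fd0 unfolding sp .
  have fu: "finite (carrier (class_ring :: bit ring))" by (simp add: class_ring_simps UNIV_bit)
  have cu: "card (carrier (class_ring :: bit ring)) = 2" by (simp add: class_ring_simps card_bit)
  show ?thesis using vectorspace.card_carrier_dim[OF vs fd fu] cu by simp
qed

lemma sum_shift_aux: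
  fixes x :: "bit vec"
  assumes "i < q"
  shows "(\<Sum>j\<in>{0..<q}. (if i = j + 1 then 1 else 0) * x $ j) = (if 1 \<le> i then x $ (i - 1) else 0)"
proof (cases "i = 0")
  case True then show ?thesis by simp
next
  case False
  have "(\<Sum>j\<in>{0..<q}. (if i = j + 1 then 1 else 0) * x $ j) = (\<Sum>j\<in>{0..<q}. (if j = i - 1 then x $ j else 0))"
    by (rule sum.cong) (use False in auto)
  also have "\<dots> = x $ (i - 1)" using assms by (simp add: sum.delta')
  finally show ?thesis using False by simp
qed

lemma shift_carrier[simp]: "shift_mat q \<in> carrier_mat q q"
  unfolding shift_mat_def by simp

lemma chan_carrier[simp]: "chan q n \<in> carrier_mat q q"
  unfolding chan_def by simp

lemma shift_vec:
  fixes x :: "bit vec"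
  assumes "x \<in> carrier_vec q"
  shows "shift_mat q *\<^sub>v x = vec q (\<lambda>i. if 1 \<le> i then x $ (i - 1) else 0)"
proof (rule eq_vecI)
  show "dim_vec (shift_mat q *\<^sub>v x) = dim_vec (vec q (\<lambda>i. if 1 \<le> i then x $ (i - 1) else 0))"
    unfolding shift_mat_def by simp
  fix i assume "i < dim_vec (vec q (\<lambda>i. if 1 \<le> i then x $ (i - 1) else 0))"
  then have i: "i < q" by simp
  have "(shift_mat q *\<^sub>v x) $ i = row (shift_mat q) i \<bullet> x" using i unfolding shift_mat_def by simp
  also have "\<dots> = (\<Sum>j\<in>{0..<q}. (if i = j + 1 then 1 else 0) * x $ j)"
    unfolding scalar_prod_def using assms i unfolding shift_mat_def
    by (intro sum.cong) auto
  also have "\<dots> = (if 1 \<le> i then x $ (i - 1) else 0)" using sum_shift_aux[OF i] .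
  finally show "(shift_mat q *\<^sub>v x) $ i = vec q (\<lambda>i. if 1 \<le> i then x $ (i - 1) else 0) $ i" using i by simp
qed

lemma shift_pow_vec:
  fixes x :: "bit vec"
  assumes "x \<in> carrier_vec q"
  shows "shift_mat q ^\<^sub>m k *\<^sub>v x = vec q (\<lambda>i. if k \<le> i then x $ (i - k) else 0)"
  using assms
proof (induction k arbitrary: x)
  case 0
  have "shift_mat q ^\<^sub>m 0 = 1\<^sub>m q" unfolding shift_mat_def by simp
  then show ?case using 0 by (intro eq_vecI) auto
next
  case (Suc k)
  have "shift_mat q ^\<^sub>m Suc k *\<^sub>v x = shift_mat q ^\<^sub>m k *\<^sub>v (shift_mat q *\<^sub>v x)"
    using Suc.prems by (simp del: assoc_mult_mat_vec add: assoc_mult_mat_vec[of _ q q _ q])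
  also have "\<dots> = vec q (\<lambda>i. if k \<le> i then (shift_mat q *\<^sub>v x) $ (i - k) else 0)"
    by (rule Suc.IH) (simp add: shift_vec[OF Suc.prems])
  also have "\<dots> = vec q (\<lambda>i. if Suc k \<le> i then x $ (i - Suc k) else 0)"
    by (intro eq_vecI) (auto simp: shift_vec[OF Suc.prems])
  finally show ?case .
qed

lemma chan_vec:
  fixes x :: "bit vec"
  assumes "x \<in> carrier_vec q"
  shows "chan q n *\<^sub>v x = vec q (\<lambda>i. if q - n \<le> i then x $ (i - (q - n)) else 0)"
  unfolding chan_def using shift_pow_vec[OF assms] .

lemma chan_vec_carrier[simp]: "chan q n *\<^sub>v x \<in> carrier_vec q"
  using chan_carrier by (metis carrier_matD(1) carrier_vec_dim_vec dim_mult_mat_vec)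

lemma chan_vec_index:
  fixes x :: "bit vec"
  assumes "x \<in> carrier_vec q" "i < q"
  shows "(chan q n *\<^sub>v x) $ i = (if q - n \<le> i then x $ (i - (q - n)) else 0)"
  using chan_vec[OF assms(1)] assms(2) by simp

definition yD :: "nat \<Rightarrow> nat \<Rightarrow> nat \<Rightarrow> nat \<Rightarrow> nat \<Rightarrow> nat \<Rightarrow> bit mat \<Rightarrow> bit mat \<Rightarrow> bit vec \<Rightarrow> bit vec \<Rightarrow> bit vec" where
  "yD q n1 n2 n3 n4 m GA GB xS xM =
     chan q n3 *\<^sub>v (GA *\<^sub>v (chan q n1 *\<^sub>v xS + chan q m *\<^sub>v xM)) +
     chan q n4 *\<^sub>v (GB *\<^sub>v (chan q n2 *\<^sub>v xS + chan q m *\<^sub>v xM))"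

lemma mv_carrier: "A \<in> carrier_mat q q \<Longrightarrow> A *\<^sub>v x \<in> carrier_vec q"
  by (metis carrier_matD(1) carrier_vec_dim_vec dim_mult_mat_vec)

lemma triple_assoc:
  fixes A B C :: "bit mat"
  assumes "A \<in> carrier_mat q q" "B \<in> carrier_mat q q" "C \<in> carrier_mat q q" "x \<in> carrier_vec q"
  shows "(A * B * C) *\<^sub>v x = A *\<^sub>v (B *\<^sub>v (C *\<^sub>v x))"
proof -
  have AB: "A * B \<in> carrier_mat q q" using assms by simp
  have "(A * B * C) *\<^sub>v x = (A * B) *\<^sub>v (C *\<^sub>v x)" by (rule assoc_mult_mat_vec[OF AB assms(3,4)])
  also have "\<dots> = A *\<^sub>v (B *\<^sub>v (C *\<^sub>v x))" by (rule assoc_mult_mat_vec[OF assms(1,2) mv_carrier[OF assms(3)]])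
  finally show ?thesis .
qed

lemma add4_vec:
  fixes a b c d :: "'a :: comm_monoid_add vec"
  assumes "a \<in> carrier_vec n" "b \<in> carrier_vec n" "c \<in> carrier_vec n" "d \<in> carrier_vec n"
  shows "(a + b) + (c + d) = (a + c) + (b + d)"
  using assms by (intro eq_vecI) (simp_all add: ac_simps)

lemma out_eq:
  fixes GA GB :: "bit mat" and xS xM :: "bit vec"
  assumes q: "q = net_q n1 n2 n3 n4 m"
    and GA: "GA \<in> carrier_mat q q" and GB: "GB \<in> carrier_mat q q"
    and xS: "xS \<in> carrier_vec q" and xM: "xM \<in> carrier_vec q"
  shows "G_S n1 n2 n3 n4 m GA GB *\<^sub>v xS + G_M n1 n2 n3 n4 m GA GB *\<^sub>v xM = yD q n1 n2 n3 n4 m GA GB xS xM"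
proof -
  let ?C = "chan q"
  have c3a: "?C n3 * GA \<in> carrier_mat q q" using GA by (intro mult_carrier_mat[OF chan_carrier]) 
  have c4b: "?C n4 * GB \<in> carrier_mat q q" using GB by (intro mult_carrier_mat[OF chan_carrier])
  have GS: "G_S n1 n2 n3 n4 m GA GB *\<^sub>v xS = ?C n3 *\<^sub>v (GA *\<^sub>v (?C n1 *\<^sub>v xS)) + ?C n4 *\<^sub>v (GB *\<^sub>v (?C n2 *\<^sub>v xS))"
  proof -
    have "G_S n1 n2 n3 n4 m GA GB = ?C n3 * GA * ?C n1 + ?C n4 * GB * ?C n2"
      unfolding G_S_def q Let_def ..
    then show ?thesis using GA GB xS c3a c4b
      by (simp add: add_mult_distrib_mat_vec[of _ q q] mv_carrier triple_assoc[of _ q] del: assoc_mult_mat_vec)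
  qed
  have GM: "G_M n1 n2 n3 n4 m GA GB *\<^sub>v xM = ?C n3 *\<^sub>v (GA *\<^sub>v (?C m *\<^sub>v xM)) + ?C n4 *\<^sub>v (GB *\<^sub>v (?C m *\<^sub>v xM))"
  proof -
    have "G_M n1 n2 n3 n4 m GA GB = ?C n3 * GA * ?C m + ?C n4 * GB * ?C m"
      unfolding G_M_def q Let_def ..
    then show ?thesis using GA GB xM c3a c4b
      by (simp add: add_mult_distrib_mat_vec[of _ q q] mv_carrier triple_assoc[of _ q] del: assoc_mult_mat_vec)
  qed
  have Y: "yD q n1 n2 n3 n4 m GA GB xS xM =
     (?C n3 *\<^sub>v (GA *\<^sub>v (?C n1 *\<^sub>v xS)) + ?C n3 *\<^sub>v (GA *\<^sub>v (?C m *\<^sub>v xM))) +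
     (?C n4 *\<^sub>v (GB *\<^sub>v (?C n2 *\<^sub>v xS)) + ?C n4 *\<^sub>v (GB *\<^sub>v (?C m *\<^sub>v xM)))"
    unfolding yD_def using GA GB
    by (simp add: mult_add_distrib_mat_vec[of _ q q] mv_carrier)
  show ?thesis unfolding GS GM Y
    by (rule add4_vec[of _ q]) (simp_all add: mv_carrier GA GB)
qed

lemma bit_add_self[simp]: "(x::bit) + x = 0" by (cases x) simp_all

lemma mat_vec_zero: "A \<in> carrier_mat q q \<Longrightarrow> A *\<^sub>v 0\<^sub>v q = (0\<^sub>v q :: bit vec)"
  by (intro eq_vecI) (auto simp: carrier_matD)

lemma chan_dims[simp]: "dim_row (chan q n) = q" "dim_col (chan q n) = q"
  unfolding chan_def shift_mat_def by simp_all

lemma yD_carrier[simp]: "yD q n1 n2 n3 n4 m GA GB xS xM \<in> carrier_vec q"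
  unfolding yD_def by (simp add: mv_carrier)

lemma yD_low:
  assumes GA: "GA \<in> carrier_mat q q" and GB: "GB \<in> carrier_mat q q"
    and "n4 \<le> n3" "p < q - n3"
  shows "yD q n1 n2 n3 n4 m GA GB xS xM $ p = 0"
proof -
  have p: "p < q" using assms by simp
  show ?thesis unfolding yD_def using p assms
    by (simp add: chan_vec_index mv_carrier del: index_mult_mat_vec)
qed

lemma chan_eqI:
  fixes x y :: "bit vec"
  assumes "x \<in> carrier_vec q" "y \<in> carrier_vec q" "n \<le> q" "\<And>i. i < n \<Longrightarrow> x $ i = y $ i"
  shows "chan q n *\<^sub>v x = chan q n *\<^sub>v y"
proof (rule eq_vecI)
  fix i assume "i < dim_vec (chan q n *\<^sub>v y)"
  then have i: "i < q" using mv_carrier[OF chan_carrier] by (metis carrier_vecD)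
  show "(chan q n *\<^sub>v x) $ i = (chan q n *\<^sub>v y) $ i"
    using i assms by (simp add: chan_vec_index del: index_mult_mat_vec)
qed (simp add: mv_carrier)

lemma yD_dep:
  assumes "xS \<in> carrier_vec q" "xS' \<in> carrier_vec q" "n1 \<le> q" "n2 \<le> n1"
    and "\<And>i. i < n1 \<Longrightarrow> xS $ i = xS' $ i"
  shows "yD q n1 n2 n3 n4 m GA GB xS xM = yD q n1 n2 n3 n4 m GA GB xS' xM"
proof -
  have "chan q n1 *\<^sub>v xS = chan q n1 *\<^sub>v xS'" by (rule chan_eqI) (use assms in auto)
  moreover have "chan q n2 *\<^sub>v xS = chan q n2 *\<^sub>v xS'" by (rule chan_eqI) (use assms in auto)
  ultimately show ?thesis unfolding yD_def by simp
qed

definition eW :: "nat \<Rightarrow> nat \<Rightarrow> nat \<Rightarrow> bit vec \<Rightarrow> bit vec" where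
  "eW q n1 m d = vec q (\<lambda>j. if j + (n1 - m) < q then d $ (j + (n1 - m)) else 0)"

lemma eW_carrier[simp]: "eW q n1 m d \<in> carrier_vec q"
  unfolding eW_def by simp

lemma eW_cancel:
  assumes d: "d \<in> carrier_vec q" and "m \<le> n1" "n1 \<le> q" and z: "\<And>i. i < n1 - m \<Longrightarrow> d $ i = 0"
  shows "chan q n1 *\<^sub>v d + chan q m *\<^sub>v eW q n1 m d = 0\<^sub>v q"
proof (rule eq_vecI)
  fix i assume "i < dim_vec (0\<^sub>v q :: bit vec)"
  then have i: "i < q" by simp
  have e: "(chan q n1 *\<^sub>v d) $ i = (chan q m *\<^sub>v eW q n1 m d) $ i"
  proof (cases "q - m \<le> i")
    case True
    then show ?thesis using i assms by (simp add: chan_vec_index eW_def del: index_mult_mat_vec)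
  next
    case False
    then show ?thesis using i assms by (simp add: chan_vec_index eW_def del: index_mult_mat_vec)
  qed
  show "(chan q n1 *\<^sub>v d + chan q m *\<^sub>v eW q n1 m d) $ i = 0\<^sub>v q $ i"
    using i e by (simp add: mv_carrier)
qed (simp add: mv_carrier)

lemma yD_W:
  assumes GA: "GA \<in> carrier_mat q q" and GB: "GB \<in> carrier_mat q q"
    and d: "d \<in> carrier_vec q" and "m \<le> n1" "n1 \<le> q" and z: "\<And>i. i < n1 - m \<Longrightarrow> d $ i = 0"
    and p: "p < q - n4"
  shows "yD q n1 n2 n3 n4 m GA GB d (eW q n1 m d) $ p = 0"
proof -
  have p': "p < q" using p by simp
  have c: "chan q n1 *\<^sub>v d + chan q m *\<^sub>v eW q n1 m d = 0\<^sub>v q"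
    by (rule eW_cancel) (use assms in auto)
  show ?thesis unfolding yD_def c using p p' GA GB
    by (simp add: mat_vec_zero chan_vec_index mv_carrier del: index_mult_mat_vec)
qed

lemma inj_lists_bound:
  fixes f :: "'a \<Rightarrow> bit list"
  assumes "inj_on f X" "\<And>x. x \<in> X \<Longrightarrow> length (f x) = k"
  shows "card X \<le> 2 ^ k"
proof -
  have fin: "finite {xs. set xs \<subseteq> (UNIV::bit set) \<and> length xs = k}" by (rule finite_lists_bit)
  have sub: "f ` X \<subseteq> {xs. set xs \<subseteq> (UNIV::bit set) \<and> length xs = k}" using assms(2) by auto
  have "card X \<le> card {xs. set xs \<subseteq> (UNIV::bit set) \<and> length xs = k}"
    by (rule card_inj_on_le[OF assms(1) sub fin])
  also have "\<dots> = 2 ^ k"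
  proof -
    have fu: "finite (UNIV::bit set)" by (simp add: UNIV_bit)
    show ?thesis by (simp only: card_lists_length_eq[OF fu] card_bit)
  qed
  finally show ?thesis .
qed

lemma tail_eq:
  fixes v w :: "bit vec"
  assumes "v \<in> carrier_vec q" "w \<in> carrier_vec q" "k \<le> q"
    and "\<And>p. p < q - k \<Longrightarrow> v $ p = 0" "\<And>p. p < q - k \<Longrightarrow> w $ p = 0"
    and "map (\<lambda>i. v $ (q - k + i)) [0..<k] = map (\<lambda>i. w $ (q - k + i)) [0..<k]"
  shows "v = w"
proof (rule eq_vecI)
  fix p assume "p < dim_vec w"
  then have p: "p < q" using assms by simp
  show "v $ p = w $ p"
  proof (cases "p < q - k")
    case True then show ?thesis using assms by simp
  next
    case False
    define i where "i = p - (q - k)"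
    have i: "i < k" "p = q - k + i" using False p assms(3) unfolding i_def by auto
    have "map (\<lambda>i. v $ (q - k + i)) [0..<k] ! i = map (\<lambda>i. w $ (q - k + i)) [0..<k] ! i"
      using assms(6) by (rule arg_cong)
    then show ?thesis using i by simp
  qed
qed (use assms in simp)

lemma upper_n3:
  assumes GA: "GA \<in> carrier_mat q q" and GB: "GB \<in> carrier_mat q q"
    and le: "n4 \<le> n3" "n3 \<le> q"
    and XC: "X \<subseteq> carrier_vec q"
    and dec: "\<And>xS xS' xM xM'. xS \<in> X \<Longrightarrow> xS' \<in> X \<Longrightarrow> xM \<in> carrier_vec q \<Longrightarrow> xM' \<in> carrier_vec q \<Longrightarrow>
       yD q n1 n2 n3 n4 m GA GB xS xM = yD q n1 n2 n3 n4 m GA GB xS' xM' \<Longrightarrow> xS = xS'"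
  shows "card X \<le> 2 ^ n3"
proof (rule inj_lists_bound)
  let ?O = "\<lambda>x. yD q n1 n2 n3 n4 m GA GB x (0\<^sub>v q)"
  show "inj_on (\<lambda>x. map (\<lambda>i. ?O x $ (q - n3 + i)) [0..<n3]) X"
  proof (rule inj_onI)
    fix x y assume x: "x \<in> X" and y: "y \<in> X"
      and e: "map (\<lambda>i. ?O x $ (q - n3 + i)) [0..<n3] = map (\<lambda>i. ?O y $ (q - n3 + i)) [0..<n3]"
    have "?O x = ?O y"
      by (rule tail_eq[OF yD_carrier yD_carrier le(2) _ _ e])
         (auto intro: yD_low[OF GA GB le(1)])
    then show "x = y" by (rule dec[OF x y zero_carrier_vec zero_carrier_vec])
  qed
qed simp

lemma card_fibers:
  fixes \<pi> :: "'a \<Rightarrow> 'b"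
  assumes "finite X" "finite W" "card (\<pi> ` X) \<le> A"
    and "\<And>l. l \<in> \<pi> ` X \<Longrightarrow> card {x\<in>X. \<pi> x = l} \<le> card W"
  shows "card X \<le> A * card W"
proof -
  have X: "X = (\<Union>l\<in>\<pi> ` X. {x\<in>X. \<pi> x = l})" by blast
  have "card X \<le> (\<Sum>l\<in>\<pi> ` X. card {x\<in>X. \<pi> x = l})"
    by (subst X, rule card_UN_le) (use assms(1) in simp)
  also have "\<dots> \<le> (\<Sum>l\<in>\<pi> ` X. card W)" by (rule sum_mono) (use assms(4) in simp)
  also have "\<dots> = card (\<pi> ` X) * card W" by simp
  also have "\<dots> \<le> A * card W" using assms(3) by simp
  finally show ?thesis .
qed

lemma upper_W:
  assumes GA: "GA \<in> carrier_mat q q" and GB: "GB \<in> carrier_mat q q"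
    and le: "n2 < n1" "m \<le> n1" "n1 \<le> q" "n4 \<le> q"
    and XC: "X \<subseteq> carrier_vec q"
    and add: "\<And>x y. x \<in> X \<Longrightarrow> y \<in> X \<Longrightarrow> x + y \<in> X"
    and dec: "\<And>xS xS' xM xM'. xS \<in> X \<Longrightarrow> xS' \<in> X \<Longrightarrow> xM \<in> carrier_vec q \<Longrightarrow> xM' \<in> carrier_vec q \<Longrightarrow>
       yD q n1 n2 n3 n4 m GA GB xS xM = yD q n1 n2 n3 n4 m GA GB xS' xM' \<Longrightarrow> xS = xS'"
  shows "card X \<le> 2 ^ (n1 - m + min m n4)"
proof -
  let ?O = "yD q n1 n2 n3 n4 m GA GB"
  define W where "W = {x\<in>X. \<forall>i<n1 - m. x $ i = 0}"
  have WX: "W \<subseteq> X" unfolding W_def by auto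
  have fX: "finite X" using finite_subset[OF XC finite_carrier_vec_bit] .
  have fW: "finite W" using finite_subset[OF WX fX] .
  have Wm: "card W \<le> 2 ^ m"
  proof (rule inj_lists_bound)
    show "inj_on (\<lambda>x. map (\<lambda>j. x $ (n1 - m + j)) [0..<m]) W"
    proof (rule inj_onI)
      fix x y assume x: "x \<in> W" and y: "y \<in> W"
        and e: "map (\<lambda>j. x $ (n1 - m + j)) [0..<m] = map (\<lambda>j. y $ (n1 - m + j)) [0..<m]"
      have xy: "x \<in> X" "y \<in> X" using x y WX by auto
      have agree: "x $ i = y $ i" if i: "i < n1" for i
      proof (cases "i < n1 - m")
        case True then show ?thesis using x y unfolding W_def by auto
      next
        case False
        define j where "j = i - (n1 - m)"
        have j: "j < m" "i = n1 - m + j" using False i le unfolding j_def by auto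
        have "map (\<lambda>j. x $ (n1 - m + j)) [0..<m] ! j = map (\<lambda>j. y $ (n1 - m + j)) [0..<m] ! j"
          using e by (rule arg_cong)
        then show ?thesis using j by simp
      qed
      have "?O x (0\<^sub>v q) = ?O y (0\<^sub>v q)"
        by (rule yD_dep) (use xy XC le agree in auto)
      then show "x = y" by (rule dec[OF xy zero_carrier_vec zero_carrier_vec])
    qed
  qed simp
  have Wn4: "card W \<le> 2 ^ n4"
  proof (rule inj_lists_bound)
    let ?f = "\<lambda>x. ?O x (eW q n1 m x)"
    show "inj_on (\<lambda>x. map (\<lambda>i. ?f x $ (q - n4 + i)) [0..<n4]) W"
    proof (rule inj_onI)
      fix x y assume x: "x \<in> W" and y: "y \<in> W"
        and e: "map (\<lambda>i. ?f x $ (q - n4 + i)) [0..<n4] = map (\<lambda>i. ?f y $ (q - n4 + i)) [0..<n4]"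
      have xy: "x \<in> X" "y \<in> X" using x y WX by auto
      have xc: "x \<in> carrier_vec q" "y \<in> carrier_vec q" using xy XC by auto
      have zx: "\<And>i. i < n1 - m \<Longrightarrow> x $ i = 0" and zy: "\<And>i. i < n1 - m \<Longrightarrow> y $ i = 0"
        using x y unfolding W_def by auto
      have "?f x = ?f y"
        by (rule tail_eq[OF yD_carrier yD_carrier le(4) _ _ e])
           (auto intro: yD_W[OF GA GB xc(1) le(2,3) zx] yD_W[OF GA GB xc(2) le(2,3) zy])
      then show "x = y" by (rule dec[OF xy eW_carrier eW_carrier])
    qed
  qed simp
  have Wb: "card W \<le> 2 ^ min m n4" using Wm Wn4 by (simp add: min_def)
  let ?\<pi> = "\<lambda>x. map (\<lambda>i. x $ i) [0..<n1 - m]"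
  have "card X \<le> 2 ^ (n1 - m) * card W"
  proof (rule card_fibers[OF fX fW])
    show "card (?\<pi> ` X) \<le> 2 ^ (n1 - m)"
    proof -
      have "card (?\<pi> ` X) \<le> card {xs. set xs \<subseteq> (UNIV::bit set) \<and> length xs = n1 - m}"
        by (rule card_mono[OF finite_lists_bit]) auto
      also have "\<dots> = 2 ^ (n1 - m)"
      proof -
        have fu: "finite (UNIV::bit set)" by (simp add: UNIV_bit)
        show ?thesis by (simp only: card_lists_length_eq[OF fu] card_bit)
      qed
      finally show ?thesis .
    qed
    fix l assume "l \<in> ?\<pi> ` X"
    then obtain x0 where x0: "x0 \<in> X" "?\<pi> x0 = l" by blast
    have x0c: "x0 \<in> carrier_vec q" using x0 XC by auto
    show "card {x\<in>X. ?\<pi> x = l} \<le> card W"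
    proof (rule card_inj_on_le[where f = "\<lambda>x. x + x0"])
      show "inj_on (\<lambda>x. x + x0) {x\<in>X. ?\<pi> x = l}"
      proof (rule inj_onI)
        fix x y assume x: "x \<in> {x\<in>X. ?\<pi> x = l}" and y: "y \<in> {x\<in>X. ?\<pi> x = l}" and e: "x + x0 = y + x0"
        have xc: "x \<in> carrier_vec q" "y \<in> carrier_vec q" using x y XC by auto
        show "x = y"
        proof (rule eq_vecI)
          fix i assume "i < dim_vec y"
          then have i: "i < q" using xc by simp
          have "(x + x0) $ i = (y + x0) $ i" using e by simp
          moreover have "(x + x0) $ i = x $ i + x0 $ i" by (rule index_add_vec(1)) (use i x0c in simp)
          moreover have "(y + x0) $ i = y $ i + x0 $ i" by (rule index_add_vec(1)) (use i x0c in simp)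
          ultimately show "x $ i = y $ i" by (metis add_right_cancel)
        qed (use xc in simp)
      qed
      show "(\<lambda>x. x + x0) ` {x\<in>X. ?\<pi> x = l} \<subseteq> W"
      proof
        fix z assume "z \<in> (\<lambda>x. x + x0) ` {x\<in>X. ?\<pi> x = l}"
        then obtain x where x: "x \<in> X" "?\<pi> x = l" and z: "z = x + x0" by blast
        have "z \<in> X" unfolding z using add[OF x(1) x0(1)] .
        moreover have "z $ i = 0" if i: "i < n1 - m" for i
        proof -
          have "?\<pi> x ! i = ?\<pi> x0 ! i" using x(2) x0(2) by simp
          then have "x $ i = x0 $ i" using i by simp
          moreover have "i < q" using i le by simp
          ultimately show ?thesis unfolding z using x0c by simp
        qed
        ultimately show "z \<in> W" unfolding W_def by blast
      qed
    qed (rule fW)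
  qed
  also have "\<dots> \<le> 2 ^ (n1 - m) * 2 ^ min m n4" using Wb by simp
  also have "\<dots> = 2 ^ (n1 - m + min m n4)" by (simp add: power_add)
  finally show ?thesis .
qed

lemma sel_vec:
  fixes y :: "bit vec"
  assumes y: "y \<in> carrier_vec q" and t: "t < q"
  shows "(mat q q (\<lambda>(t,j). if P t \<and> j = f t then 1 else 0) *\<^sub>v y) $ t = (if P t \<and> f t < q then y $ (f t) else 0)"
proof -
  have "(mat q q (\<lambda>(t,j). if P t \<and> j = f t then 1 else 0) *\<^sub>v y) $ t
      = (\<Sum>j\<in>{0..<q}. (if P t \<and> j = f t then 1 else 0) * y $ j)"
    using y t by (simp add: scalar_prod_def)
  also have "\<dots> = (\<Sum>j\<in>{0..<q}. (if j = f t then (if P t then y $ j else 0) else 0))"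
    by (rule sum.cong) auto
  also have "\<dots> = (if P t \<and> f t < q then y $ (f t) else 0)"
    by (simp add: sum.delta')
  finally show ?thesis .
qed

definition GAopt :: "nat \<Rightarrow> nat \<Rightarrow> nat \<Rightarrow> nat \<Rightarrow> bit mat" where
  "GAopt q n1 n3 B = mat q q (\<lambda>(t,j). if n3 - B \<le> t \<and> j = t + (q - n3) - (n1 - B) then 1 else 0)"

definition GBopt :: "nat \<Rightarrow> nat \<Rightarrow> nat \<Rightarrow> nat \<Rightarrow> nat \<Rightarrow> bit mat" where
  "GBopt q n1 n4 m B = mat q q (\<lambda>(s,j). if q - B + (n1 - m) \<le> s + (q - n4) \<and> j = s + (q - n4) - (n1 - B) then 1 else 0)"

lemma GAopt_carrier: "GAopt q n1 n3 B \<in> carrier_mat q q" unfolding GAopt_def by simp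
lemma GBopt_carrier: "GBopt q n1 n4 m B \<in> carrier_mat q q" unfolding GBopt_def by simp

lemma bit_cancel3: "((a::bit) + c) + (d + c) = a + d"
  by (cases a; cases c; cases d) simp_all

lemma yD_opt_entry:
  fixes xS xM :: "bit vec"
  assumes xS: "xS \<in> carrier_vec q" and xM: "xM \<in> carrier_vec q"
    and le: "n1 \<le> q" "n2 < n1" "n3 \<le> q" "n4 \<le> n3" "m \<le> n1"
    and B: "B \<le> n3" "B \<le> n1 - m + n4" "B \<le> n1"
    and i: "i < B"
  shows "yD q n1 n2 n3 n4 m (GAopt q n1 n3 B) (GBopt q n1 n4 m B) xS xM $ (q - B + i)
       = xS $ i + (if n1 - m \<le> i \<and> n1 - n2 \<le> i then xS $ (i - (n1 - n2)) else 0)"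
proof -
  define p where "p = q - B + i"
  define yA where "yA = chan q n1 *\<^sub>v xS + chan q m *\<^sub>v xM"
  define yB where "yB = chan q n2 *\<^sub>v xS + chan q m *\<^sub>v xM"
  have yA: "yA \<in> carrier_vec q" unfolding yA_def by simp
  have yB: "yB \<in> carrier_vec q" unfolding yB_def by simp
  have p: "p < q" unfolding p_def using i B le by linarith
  have yAe: "yA $ (q - n1 + i) = xS $ i + (if n1 - m \<le> i then xM $ (i - (n1 - m)) else 0)"
  proof -
    have a: "q - n1 + i < q" using i B le by linarith
    have "yA $ (q - n1 + i) = (chan q n1 *\<^sub>v xS) $ (q - n1 + i) + (chan q m *\<^sub>v xM) $ (q - n1 + i)"
      unfolding yA_def using a by (simp del: index_mult_mat_vec)
    also have "(chan q n1 *\<^sub>v xS) $ (q - n1 + i) = xS $ i"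
      using chan_vec_index[OF xS a] le by simp
    also have "(chan q m *\<^sub>v xM) $ (q - n1 + i) = (if n1 - m \<le> i then xM $ (i - (n1 - m)) else 0)"
      using chan_vec_index[OF xM a] le by (auto simp: algebra_simps)
    finally show ?thesis .
  qed
  have yBe: "yB $ (q - n1 + i) = (if n1 - n2 \<le> i then xS $ (i - (n1 - n2)) else 0) + (if n1 - m \<le> i then xM $ (i - (n1 - m)) else 0)"
  proof -
    have a: "q - n1 + i < q" using i B le by linarith
    have "yB $ (q - n1 + i) = (chan q n2 *\<^sub>v xS) $ (q - n1 + i) + (chan q m *\<^sub>v xM) $ (q - n1 + i)"
      unfolding yB_def using a by (simp del: index_mult_mat_vec)
    also have "(chan q n2 *\<^sub>v xS) $ (q - n1 + i) = (if n1 - n2 \<le> i then xS $ (i - (n1 - n2)) else 0)"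
      using chan_vec_index[OF xS a] le by (auto simp: algebra_simps)
    also have "(chan q m *\<^sub>v xM) $ (q - n1 + i) = (if n1 - m \<le> i then xM $ (i - (n1 - m)) else 0)"
      using chan_vec_index[OF xM a] le by (auto simp: algebra_simps)
    finally show ?thesis .
  qed
  have Apart: "(chan q n3 *\<^sub>v (GAopt q n1 n3 B *\<^sub>v yA)) $ p = yA $ (q - n1 + i)"
  proof -
    have t: "p - (q - n3) < q" using p by linarith
    have "(chan q n3 *\<^sub>v (GAopt q n1 n3 B *\<^sub>v yA)) $ p = (GAopt q n1 n3 B *\<^sub>v yA) $ (p - (q - n3))"
      using chan_vec_index[OF mv_carrier[OF GAopt_carrier] p] p_def B le by simp
    also have "\<dots> = (if n3 - B \<le> p - (q - n3) \<and> p - (q - n3) + (q - n3) - (n1 - B) < q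
           then yA $ (p - (q - n3) + (q - n3) - (n1 - B)) else 0)"
      unfolding GAopt_def by (rule sel_vec[OF yA t])
    also have "\<dots> = yA $ (q - n1 + i)"
    proof -
      have c: "n3 - B \<le> p - (q - n3) \<and> p - (q - n3) + (q - n3) - (n1 - B) < q"
        using p_def i B le by linarith
      have e: "p - (q - n3) + (q - n3) - (n1 - B) = q - n1 + i"
        using p_def i B le by linarith
      show ?thesis using c e by simp
    qed
    finally show ?thesis .
  qed
  have Bpart: "(chan q n4 *\<^sub>v (GBopt q n1 n4 m B *\<^sub>v yB)) $ p = (if n1 - m \<le> i then yB $ (q - n1 + i) else 0)"
  proof (cases "q - n4 \<le> p")
    case True
    have t: "p - (q - n4) < q" using p by linarith
    have "(chan q n4 *\<^sub>v (GBopt q n1 n4 m B *\<^sub>v yB)) $ p = (GBopt q n1 n4 m B *\<^sub>v yB) $ (p - (q - n4))"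
      using chan_vec_index[OF mv_carrier[OF GBopt_carrier] p] True by simp
    also have "\<dots> = (if q - B + (n1 - m) \<le> p - (q - n4) + (q - n4) \<and> p - (q - n4) + (q - n4) - (n1 - B) < q
           then yB $ (p - (q - n4) + (q - n4) - (n1 - B)) else 0)"
      unfolding GBopt_def by (rule sel_vec[OF yB t])
    also have "\<dots> = (if n1 - m \<le> i then yB $ (q - n1 + i) else 0)"
    proof -
      have c: "(q - B + (n1 - m) \<le> p - (q - n4) + (q - n4) \<and> p - (q - n4) + (q - n4) - (n1 - B) < q) = (n1 - m \<le> i)"
        using p_def i B le True by linarith
      have e: "p - (q - n4) + (q - n4) - (n1 - B) = q - n1 + i"
        using p_def i B le True by linarith
      show ?thesis using c e by simp
    qed
    finally show ?thesis .
  next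
    case False
    then have "\<not> n1 - m \<le> i" using p_def B le i by linarith
    then show ?thesis using chan_vec_index[OF mv_carrier[OF GBopt_carrier] p] False by simp
  qed
  have "yD q n1 n2 n3 n4 m (GAopt q n1 n3 B) (GBopt q n1 n4 m B) xS xM $ p
     = (chan q n3 *\<^sub>v (GAopt q n1 n3 B *\<^sub>v yA)) $ p + (chan q n4 *\<^sub>v (GBopt q n1 n4 m B *\<^sub>v yB)) $ p"
    unfolding yD_def yA_def yB_def using p by (simp del: index_mult_mat_vec)
  also have "\<dots> = xS $ i + (if n1 - m \<le> i \<and> n1 - n2 \<le> i then xS $ (i - (n1 - n2)) else 0)"
    unfolding Apart Bpart yAe yBe by (cases "n1 - m \<le> i") (simp_all add: bit_cancel3)
  finally show ?thesis unfolding p_def .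
qed

definition XB :: "nat \<Rightarrow> nat \<Rightarrow> bit vec set" where
  "XB q B = {x \<in> carrier_vec q. \<forall>i<q. B \<le> i \<longrightarrow> x $ i = 0}"

lemma XB_subspace: "VectorSpace.subspace class_ring (XB q B) (module_vec TYPE(bit) q)"
  unfolding subspace_def
proof (intro conjI)
  show "vectorspace class_ring (module_vec TYPE(bit) q)" by (rule vec_vs)
  show "submodule class_ring (XB q B) (module_vec TYPE(bit) q)"
    unfolding submodule_def module_vec_simps
  proof (intro conjI allI impI ballI)
    show "module class_ring (module_vec TYPE(bit) q)" by (rule vec_module)
    show "XB q B \<subseteq> carrier_vec q" unfolding XB_def by auto
    show "0\<^sub>v q \<in> XB q B" unfolding XB_def by auto
  next
    fix v w assume "v \<in> XB q B" "w \<in> XB q B"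
    then have v: "v \<in> carrier_vec q" "\<And>i. i < q \<Longrightarrow> B \<le> i \<Longrightarrow> v $ i = 0"
      and w: "w \<in> carrier_vec q" "\<And>i. i < q \<Longrightarrow> B \<le> i \<Longrightarrow> w $ i = 0" unfolding XB_def by auto
    have "v + w \<in> carrier_vec q" using v(1) w(1) by simp
    moreover have "(v + w) $ i = 0" if "i < q" "B \<le> i" for i
      using v w that by simp
    ultimately show "v + w \<in> XB q B" unfolding XB_def by blast
  next
    fix c :: bit and v assume "c \<in> carrier class_ring" "v \<in> XB q B"
    then have v: "v \<in> carrier_vec q" "\<And>i. i < q \<Longrightarrow> B \<le> i \<Longrightarrow> v $ i = 0" unfolding XB_def by auto
    have "c \<cdot>\<^sub>v v \<in> carrier_vec q" using v(1) by simp
    moreover have "(c \<cdot>\<^sub>v v) $ i = 0" if "i < q" "B \<le> i" for i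
      using v that by simp
    ultimately show "c \<cdot>\<^sub>v v \<in> XB q B" unfolding XB_def by blast
  qed
qed

lemma card_XB:
  assumes "B \<le> q"
  shows "card (XB q B) = 2 ^ B"
proof -
  let ?L = "{xs. set xs \<subseteq> (UNIV::bit set) \<and> length xs = B}"
  let ?f = "\<lambda>x. map (\<lambda>i. x $ i) [0..<B]"
  have inj: "inj_on ?f (XB q B)"
  proof (rule inj_onI)
    fix x y assume x: "x \<in> XB q B" and y: "y \<in> XB q B" and e: "?f x = ?f y"
    show "x = y"
    proof (rule eq_vecI)
      fix i assume "i < dim_vec y"
      then have i: "i < q" using y unfolding XB_def by auto
      show "x $ i = y $ i"
      proof (cases "i < B")
        case True
        have "?f x ! i = ?f y ! i" using e by (rule arg_cong)
        then show ?thesis using True by simp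
      next
        case False then show ?thesis using x y i unfolding XB_def by auto
      qed
    qed (use x y in \<open>auto simp: XB_def\<close>)
  qed
  have img: "?f ` XB q B = ?L"
  proof
    show "?f ` XB q B \<subseteq> ?L" by auto
    show "?L \<subseteq> ?f ` XB q B"
    proof
      fix l assume l: "l \<in> ?L"
      define v where "v = vec q (\<lambda>i. if i < B then l ! i else 0)"
      have "v \<in> XB q B" unfolding v_def XB_def by auto
      moreover have "?f v = l"
      proof (rule nth_equalityI)
        show "length (?f v) = length l" using l by simp
        fix i assume "i < length (?f v)"
        then show "?f v ! i = l ! i" unfolding v_def using assms by simp
      qed
      ultimately show "l \<in> ?f ` XB q B" by (intro image_eqI[of l ?f v]) simp_all
    qed
  qed
  have "card (XB q B) = card ?L" using card_image[OF inj] img by simp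
  also have "\<dots> = 2 ^ B"
  proof -
    have fu: "finite (UNIV::bit set)" by (simp add: UNIV_bit)
    show ?thesis by (simp only: card_lists_length_eq[OF fu] card_bit)
  qed
  finally show ?thesis .
qed

lemma dim_XB:
  assumes "B \<le> q"
  shows "vectorspace.dim class_ring ((module_vec TYPE(bit) q)\<lparr>carrier := XB q B\<rparr>) = B"
proof -
  have "(2::nat) ^ vectorspace.dim class_ring ((module_vec TYPE(bit) q)\<lparr>carrier := XB q B\<rparr>) = 2 ^ B"
    using card_subspace[OF XB_subspace] card_XB[OF assms] by simp
  then show ?thesis by simp
qed

lemma dec_opt:
  fixes xS xS' xM xM' :: "bit vec"
  assumes le: "n1 \<le> q" "n2 < n1" "n3 \<le> q" "n4 \<le> n3" "m \<le> n1"
    and B: "B \<le> n3" "B \<le> n1 - m + n4" "B \<le> n1"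
    and xS: "xS \<in> XB q B" and xS': "xS' \<in> XB q B"
    and xM: "xM \<in> carrier_vec q" and xM': "xM' \<in> carrier_vec q"
    and e: "yD q n1 n2 n3 n4 m (GAopt q n1 n3 B) (GBopt q n1 n4 m B) xS xM =
            yD q n1 n2 n3 n4 m (GAopt q n1 n3 B) (GBopt q n1 n4 m B) xS' xM'"
  shows "xS = xS'"
proof -
  have xSc: "xS \<in> carrier_vec q" and xSc': "xS' \<in> carrier_vec q" using xS xS' unfolding XB_def by auto
  have all: "i < q \<longrightarrow> xS $ i = xS' $ i" for i
  proof (induction i rule: less_induct)
    case (less i)
    show ?case
    proof
      assume i: "i < q"
      show "xS $ i = xS' $ i"
      proof (cases "i < B")
        case False
        then have Bi: "B \<le> i" by simp
        have z1: "\<forall>i<q. B \<le> i \<longrightarrow> xS $ i = 0" using xS unfolding XB_def by blast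
        have z2: "\<forall>i<q. B \<le> i \<longrightarrow> xS' $ i = 0" using xS' unfolding XB_def by blast
        show ?thesis using z1 z2 i Bi by simp
      next
        case True
        let ?c = "\<lambda>x::bit vec. (if n1 - m \<le> i \<and> n1 - n2 \<le> i then x $ (i - (n1 - n2)) else 0)"
        have "xS $ i + ?c xS = yD q n1 n2 n3 n4 m (GAopt q n1 n3 B) (GBopt q n1 n4 m B) xS xM $ (q - B + i)"
          by (rule yD_opt_entry[OF xSc xM le B True, symmetric])
        also have "\<dots> = yD q n1 n2 n3 n4 m (GAopt q n1 n3 B) (GBopt q n1 n4 m B) xS' xM' $ (q - B + i)"
          by (simp only: e)
        also have "\<dots> = xS' $ i + ?c xS'"
          by (rule yD_opt_entry[OF xSc' xM' le B True])
        finally have "xS $ i + ?c xS = xS' $ i + ?c xS'" .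
        moreover have "?c xS = ?c xS'"
        proof (cases "n1 - m \<le> i \<and> n1 - n2 \<le> i")
          case True
          have lt: "i - (n1 - n2) < i" using True le by linarith
          have lq: "i - (n1 - n2) < q" using lt i by linarith
          have eq: "xS $ (i - (n1 - n2)) = xS' $ (i - (n1 - n2))" using less.IH[OF lt] lq by blast
          show ?thesis by (simp only: if_P[OF True] eq)
        next
          case False
          show ?thesis by (simp only: if_not_P[OF False])
        qed
        ultimately have "xS $ i + ?c xS' = xS' $ i + ?c xS'" by simp
        then show ?thesis by (simp only: add_right_cancel)
      qed
    qed
  qed
  show ?thesis
  proof (rule eq_vecI)
    fix i assume "i < dim_vec xS'"
    then have "i < q" using xSc' by simp
    then show "xS $ i = xS' $ i" using all by simp
  next
    show "dim_vec xS = dim_vec xS'" using xSc xSc' by simp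
  qed
qed

lemma dec_iff:
  assumes q: "q = net_q n1 n2 n3 n4 m"
    and GA: "GA \<in> carrier_mat q q" and GB: "GB \<in> carrier_mat q q"
    and XC: "X \<subseteq> carrier_vec q"
  shows "decodable q (G_S n1 n2 n3 n4 m GA GB) (G_M n1 n2 n3 n4 m GA GB) X \<longleftrightarrow>
    (\<forall>xS\<in>X. \<forall>xS'\<in>X. \<forall>xM\<in>carrier_vec q. \<forall>xM'\<in>carrier_vec q.
       yD q n1 n2 n3 n4 m GA GB xS xM = yD q n1 n2 n3 n4 m GA GB xS' xM' \<longrightarrow> xS = xS')"
proof -
  have "G_S n1 n2 n3 n4 m GA GB *\<^sub>v xS + G_M n1 n2 n3 n4 m GA GB *\<^sub>v xM = yD q n1 n2 n3 n4 m GA GB xS xM"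
    if "xS \<in> X" "xM \<in> carrier_vec q" for xS xM
    using out_eq[OF q GA GB _ that(2)] that(1) XC by blast
  then show ?thesis unfolding decodable_def by (intro iffI ballI; metis)
qed

theorem mainTheorem4:
  fixes n1 n2 n3 n4 m :: nat
  assumes "n1 > n2" and "n3 \<ge> n4" and "m \<le> n1"
  shows "linear_capacity n1 n2 n3 n4 m = min (n1 - m + min m n4) n3"
proof -
  define q where "q = net_q n1 n2 n3 n4 m"
  define Bv where "Bv = min (n1 - m + min m n4) n3"
  have le: "n1 \<le> q" "n2 \<le> q" "n3 \<le> q" "n4 \<le> q" "m \<le> q"
    unfolding q_def net_q_def by auto
  have Bv: "Bv \<le> n3" "Bv \<le> n1 - m + n4" "Bv \<le> n1" "Bv \<le> q"
    unfolding Bv_def using le assms by auto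
  have AD: "achievable_dims n1 n2 n3 n4 m GA GB =
     {d. \<exists>X. VectorSpace.subspace class_ring X (module_vec TYPE(bit) q) \<and>
             vectorspace.dim class_ring ((module_vec TYPE(bit) q)\<lparr>carrier := X\<rparr>) = d \<and>
             decodable q (G_S n1 n2 n3 n4 m GA GB) (G_M n1 n2 n3 n4 m GA GB) X}" for GA GB
    unfolding achievable_dims_def q_def Let_def ..
  have bound: "d \<le> Bv" if GA: "GA \<in> carrier_mat q q" and GB: "GB \<in> carrier_mat q q"
    and d: "d \<in> achievable_dims n1 n2 n3 n4 m GA GB" for GA GB d
  proof -
    obtain X where sub: "VectorSpace.subspace class_ring X (module_vec TYPE(bit) q)"
      and dim: "vectorspace.dim class_ring ((module_vec TYPE(bit) q)\<lparr>carrier := X\<rparr>) = d"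
      and dec0: "decodable q (G_S n1 n2 n3 n4 m GA GB) (G_M n1 n2 n3 n4 m GA GB) X"
      using d unfolding AD by blast
    have sm: "submodule class_ring X (module_vec TYPE(bit) q)" using sub unfolding subspace_def by simp
    have XC: "X \<subseteq> carrier_vec q" using submodule.subset[OF sm] unfolding module_vec_simps .
    have add: "x + y \<in> X" if "x \<in> X" "y \<in> X" for x y
      using submodule.m_closed[OF sm that] unfolding module_vec_simps .
    have dec: "\<forall>xS\<in>X. \<forall>xS'\<in>X. \<forall>xM\<in>carrier_vec q. \<forall>xM'\<in>carrier_vec q.
       yD q n1 n2 n3 n4 m GA GB xS xM = yD q n1 n2 n3 n4 m GA GB xS' xM' \<longrightarrow> xS = xS'"
      using dec0 unfolding dec_iff[OF q_def GA GB XC] .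
    note decI = dec[rule_format]
    have card: "card X = 2 ^ d" using card_subspace[OF sub] dim by simp
    have "card X \<le> 2 ^ n3"
      by (rule upper_n3[OF GA GB assms(2) le(3) XC decI])
    then have d1: "d \<le> n3" using card by simp
    have "card X \<le> 2 ^ (n1 - m + min m n4)"
      by (rule upper_W[OF GA GB assms(1) assms(3) le(1) le(4) XC add decI])
    then have d2: "d \<le> n1 - m + min m n4" using card by simp
    show ?thesis using d1 d2 unfolding Bv_def by simp
  qed
  have fin: "finite (achievable_dims n1 n2 n3 n4 m GA GB)"
    if "GA \<in> carrier_mat q q" "GB \<in> carrier_mat q q" for GA GB
    by (rule finite_subset[of _ "{..Bv}"]) (use bound[OF that] in auto)
  have ne: "achievable_dims n1 n2 n3 n4 m GA GB \<noteq> {}"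
    if GA: "GA \<in> carrier_mat q q" and GB: "GB \<in> carrier_mat q q" for GA GB
  proof -
    have XC: "XB q 0 \<subseteq> carrier_vec q" unfolding XB_def by auto
    have "decodable q (G_S n1 n2 n3 n4 m GA GB) (G_M n1 n2 n3 n4 m GA GB) (XB q 0)"
      unfolding dec_iff[OF q_def GA GB XC]
    proof (intro ballI impI)
      fix xS xS' assume x: "xS \<in> XB q 0" "xS' \<in> XB q 0"
      show "xS = xS'"
      proof (rule eq_vecI)
        show "dim_vec xS = dim_vec xS'" using x unfolding XB_def by auto
        fix i assume "i < dim_vec xS'"
        then have "i < q" using x unfolding XB_def by auto
        then show "xS $ i = xS' $ i" using x unfolding XB_def by auto
      qed
    qed
    then have "vectorspace.dim class_ring ((module_vec TYPE(bit) q)\<lparr>carrier := XB q 0\<rparr>)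
       \<in> achievable_dims n1 n2 n3 n4 m GA GB"
      unfolding AD by (intro CollectI exI[of _ "XB q 0"] conjI XB_subspace refl)
    then show ?thesis by (rule ex_in_conv[THEN iffD1, OF exI])
  qed
  have rate_le: "rate n1 n2 n3 n4 m GA GB \<le> Bv"
    if "GA \<in> carrier_mat q q" "GB \<in> carrier_mat q q" for GA GB
    unfolding rate_def by (rule Max.boundedI[OF fin[OF that] ne[OF that]]) (rule bound[OF that])
  let ?GA = "GAopt q n1 n3 Bv" and ?GB = "GBopt q n1 n4 m Bv"
  have GAo: "?GA \<in> carrier_mat q q" by (rule GAopt_carrier)
  have GBo: "?GB \<in> carrier_mat q q" by (rule GBopt_carrier)
  have rate_opt: "rate n1 n2 n3 n4 m ?GA ?GB = Bv"
    unfolding rate_def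
  proof (rule Max_eqI[OF fin[OF GAo GBo]])
    show "y \<le> Bv" if "y \<in> achievable_dims n1 n2 n3 n4 m ?GA ?GB" for y
      by (rule bound[OF GAo GBo that])
    have XC: "XB q Bv \<subseteq> carrier_vec q" unfolding XB_def by auto
    have "decodable q (G_S n1 n2 n3 n4 m ?GA ?GB) (G_M n1 n2 n3 n4 m ?GA ?GB) (XB q Bv)"
      unfolding dec_iff[OF q_def GAo GBo XC]
    proof (intro ballI impI)
      fix xS xS' xM xM' assume "xS \<in> XB q Bv" "xS' \<in> XB q Bv" "xM \<in> carrier_vec q" "xM' \<in> carrier_vec q"
        "yD q n1 n2 n3 n4 m ?GA ?GB xS xM = yD q n1 n2 n3 n4 m ?GA ?GB xS' xM'"
      then show "xS = xS'"
        by (rule dec_opt[OF le(1) assms(1) le(3) assms(2) assms(3) Bv(1-3)])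
    qed
    then show "Bv \<in> achievable_dims n1 n2 n3 n4 m ?GA ?GB"
      unfolding AD by (intro CollectI exI[of _ "XB q Bv"] conjI XB_subspace dim_XB[OF Bv(4)])
  qed
  have "linear_capacity n1 n2 n3 n4 m =
      Max {rate n1 n2 n3 n4 m GA GB | GA GB. GA \<in> carrier_mat q q \<and> GB \<in> carrier_mat q q}"
    unfolding linear_capacity_def q_def Let_def ..
  also have "\<dots> = Bv"
  proof (rule Max_eqI)
    show "finite {rate n1 n2 n3 n4 m GA GB | GA GB. GA \<in> carrier_mat q q \<and> GB \<in> carrier_mat q q}"
      by (rule finite_subset[of _ "{..Bv}"]) (use rate_le in auto)
    show "y \<le> Bv" if "y \<in> {rate n1 n2 n3 n4 m GA GB | GA GB. GA \<in> carrier_mat q q \<and> GB \<in> carrier_mat q q}" for y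
      using that rate_le by auto
    show "Bv \<in> {rate n1 n2 n3 n4 m GA GB | GA GB. GA \<in> carrier_mat q q \<and> GB \<in> carrier_mat q q}"
      by (intro CollectI exI[of _ ?GA] exI[of _ ?GB] conjI GAo GBo rate_opt[symmetric])
  qed
  finally show ?thesis unfolding Bv_def .
qed

end
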